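(* Let $G$ be a group and let $\phi:G\to G$ be a periodic automorphism of least period $m$ (i.e. $\phi^m=\mathrm{id}$ and $\phi^k\neq \mathrm{id}$ for $0<k<m$). Let $Z$ denote one of the counting functions $RT$, $RT^f$, $RT^{ff}$, $AM^f$, and suppose $Z(\phi^n)<\infty$ for all $n\ge 1$. Then $$Z_\phi(z)=\prod_{d\mid m}\sqrt[d]{(1-z^d)^{-P(d)}},$$ where the product is over all positive divisors $d$ of $m$ and $P(d)$ is the integer $$P(d)=\sum_{d_1\mid d}\mu(d_1)\,Z(\phi^{d/d_1}),$$ with $\mu$ the number-theoretic Möbius function.
   Context: For a group $G$, $\widehat G$ denotes the unitary dual (equivalence classes of irreducible unitary representations, with the hull-kernel topology), $\widehat G_f\subset \widehat G$ the classes of finite-dimensional irreducible unitary representations, and $\widehat G_{ff}\subset\widehat G_f$ those that factor through a finite group. For an endomorphism $\phi$ of $G$: $RT(\phi)$ is the number of $[\rho]\in\widehat G$ with $\rho\circ\phi$ equivalent to $\rho$; $RT^f(\phi)$ and $RT^{ff}(\phi)$ are defined in the same way using $\widehat G_f$ and $\widehat G_{ff}$. A class $[\rho]$ is $\phi$-irreducible if $\rho\circ\phi^n$ is irreducible for every $n\ge 0$; $\widehat G^\phi_f$ denotes the set of $\phi$-irreducible classes in $\widehat G_f$ (with the subspace topology). On $\widehat G^\phi_f$ the map $\widehat\phi:[\rho]\mapsto[\rho\circ\phi]$ is well defined, and its $n$-periodic points are exactly the classes with $\rho\circ\phi^n\sim\rho$. $AM^f(\phi^n)$ is the number of isolated $n$-periodic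 points of $\widehat\phi$ on $\widehat G^\phi_f$. For $Z$ one of $RT,RT^f,RT^{ff},AM^f$, the zeta function is $Z_\phi(z)=\exp\left(\sum_{n\ge1}\frac{Z(\phi^n)}{n}z^n\right)$. *)

theory Defs
  imports "HOL-Algebra.Coset" "HOL-Analysis.Analysis" "HOL-Computational_Algebra.Squarefree"
begin

definition moebius :: "nat \<Rightarrow> int" where
  "moebius n = (if n > 0 \<and> squarefree n then (-1) ^ card (prime_factors n) else 0)"

text \<open>Every irreducible unitary representation of a (discrete) group with element type 'a
  is cyclic, hence has Hilbert dimension at most that of l2('a \<times> nat); so every class
  of the unitary dual has a representative acting on a closed subspace of l2('a \<times> nat).\<close>

type_synonym 'a vec = "'a \<times> nat \<Rightarrow> complex"
type_synonym 'a rep = "'a vec set \<times> ('a \<Rightarrow> 'a vec \<Rightarrow> 'a vec)"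

definition l2 :: "'a vec set" where
  "l2 = {x. (\<lambda>i. (cmod (x i))\<^sup>2) summable_on UNIV}"

definition l2norm :: "'a vec \<Rightarrow> real" where
  "l2norm x = sqrt (infsum (\<lambda>i. (cmod (x i))\<^sup>2) UNIV)"

definition vzero :: "'a vec" where "vzero = (\<lambda>i. 0)"

definition closed_subspace :: "'a vec set \<Rightarrow> bool" where
  "closed_subspace H \<longleftrightarrow> H \<subseteq> l2 \<and> vzero \<in> H
     \<and> (\<forall>x\<in>H. \<forall>y\<in>H. (\<lambda>i. x i + y i) \<in> H)
     \<and> (\<forall>c::complex. \<forall>x\<in>H. (\<lambda>i. c * x i) \<in> H)
     \<and> (\<forall>X f. (\<forall>n. X n \<in> H) \<and> f \<in> l2 \<and> (\<lambda>n. l2norm (\<lambda>i. X n i - f i)) \<longlonglongrightarrow> 0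
              \<longrightarrow> f \<in> H)"

definition fin_dim :: "'a vec set \<Rightarrow> bool" where
  "fin_dim H \<longleftrightarrow> (\<exists>B. finite B \<and> B \<subseteq> H \<and>
      H = {x. \<exists>c::'a vec \<Rightarrow> complex. x = (\<lambda>i. \<Sum>b\<in>B. c b * b i)})"

definition unitary_map :: "'a vec set \<Rightarrow> 'a vec set \<Rightarrow> ('a vec \<Rightarrow> 'a vec) \<Rightarrow> bool" where
  "unitary_map H H' U \<longleftrightarrow> bij_betw U H H'
     \<and> (\<forall>x\<in>H. \<forall>y\<in>H. U (\<lambda>i. x i + y i) = (\<lambda>i. U x i + U y i))
     \<and> (\<forall>c::complex. \<forall>x\<in>H. U (\<lambda>i. c * x i) = (\<lambda>i. c * U x i))
     \<and> (\<forall>x\<in>H. l2norm (U x) = l2norm x)"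

definition unitary_rep :: "('a, 'b) monoid_scheme \<Rightarrow> 'a rep \<Rightarrow> bool" where
  "unitary_rep G r \<longleftrightarrow> (case r of (H, \<rho>) \<Rightarrow>
      closed_subspace H
    \<and> (\<forall>g\<in>carrier G. unitary_map H H (\<rho> g))
    \<and> (\<forall>g\<in>carrier G. \<forall>h\<in>carrier G. \<forall>x\<in>H. \<rho> (g \<otimes>\<^bsub>G\<^esub> h) x = \<rho> g (\<rho> h x))
    \<and> (\<forall>x\<in>H. \<rho> \<one>\<^bsub>G\<^esub> x = x))"

definition irreducible_rep :: "('a, 'b) monoid_scheme \<Rightarrow> 'a rep \<Rightarrow> bool" where
  "irreducible_rep G r \<longleftrightarrow> unitary_rep G r \<and> (case r of (H, \<rho>) \<Rightarrow>
      H \<noteq> {vzero}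
    \<and> (\<forall>K. closed_subspace K \<and> K \<subseteq> H \<and> (\<forall>g\<in>carrier G. \<forall>x\<in>K. \<rho> g x \<in> K)
           \<longrightarrow> K = {vzero} \<or> K = H))"

definition rep_equiv :: "('a, 'b) monoid_scheme \<Rightarrow> 'a rep \<Rightarrow> 'a rep \<Rightarrow> bool" where
  "rep_equiv G r s \<longleftrightarrow> (case r of (H, \<rho>) \<Rightarrow> case s of (H', \<sigma>) \<Rightarrow>
      (\<exists>U. unitary_map H H' U \<and> (\<forall>g\<in>carrier G. \<forall>x\<in>H. U (\<rho> g x) = \<sigma> g (U x))))"

definition rep_comp :: "'a rep \<Rightarrow> ('a \<Rightarrow> 'a) \<Rightarrow> 'a rep" where
  "rep_comp r \<psi> = (fst r, \<lambda>g. snd r (\<psi> g))"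

definition irreps :: "('a, 'b) monoid_scheme \<Rightarrow> 'a rep set" where
  "irreps G = {r. irreducible_rep G r}"

definition dual :: "('a, 'b) monoid_scheme \<Rightarrow> 'a rep set set" where
  "dual G = irreps G // {(r, s). r \<in> irreps G \<and> s \<in> irreps G \<and> rep_equiv G r s}"

definition dual_f :: "('a, 'b) monoid_scheme \<Rightarrow> 'a rep set set" where
  "dual_f G = {C \<in> dual G. \<exists>r\<in>C. fin_dim (fst r)}"

text \<open>Factoring through a finite group = factoring through a finite quotient G/N.\<close>
definition factors_finite :: "('a, 'b) monoid_scheme \<Rightarrow> 'a rep \<Rightarrow> bool" where
  "factors_finite G r \<longleftrightarrow> (\<exists>N. N \<lhd> G \<and> finite (carrier (G Mod N))
      \<and> (\<forall>n\<in>N. \<forall>x\<in>fst r. snd r n x = x))"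

definition dual_ff :: "('a, 'b) monoid_scheme \<Rightarrow> 'a rep set set" where
  "dual_ff G = {C \<in> dual_f G. \<exists>r\<in>C. factors_finite G r}"

definition fin_supp :: "('a, 'b) monoid_scheme \<Rightarrow> ('a \<Rightarrow> complex) \<Rightarrow> bool" where
  "fin_supp G f \<longleftrightarrow> finite {g. f g \<noteq> 0} \<and> {g. f g \<noteq> 0} \<subseteq> carrier G"

definition rep_alg :: "'a rep \<Rightarrow> ('a \<Rightarrow> complex) \<Rightarrow> 'a vec \<Rightarrow> 'a vec" where
  "rep_alg r f x = (\<lambda>i. \<Sum>g\<in>{g. f g \<noteq> 0}. f g * snd r g x i)"

definition op_norm :: "'a rep \<Rightarrow> ('a \<Rightarrow> complex) \<Rightarrow> real" where
  "op_norm r f = Sup {l2norm (rep_alg r f x) | x. x \<in> fst r \<and> l2norm x \<le> 1}"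

text \<open>Closure in the hull-kernel topology of the dual: [pi] lies in the closure of S iff
  ker pi contains the intersection of the kernels of S in C*(G), i.e. pi is weakly
  contained in S: norm pi(f) <= sup over sigma in S of norm sigma(f), for f in the
  dense subalgebra C[G].\<close>
definition hk_closure :: "('a, 'b) monoid_scheme \<Rightarrow> 'a rep set set \<Rightarrow> 'a rep set set" where
  "hk_closure G S = {C \<in> dual G. S \<noteq> {} \<and>
      (\<forall>f. fin_supp G f \<longrightarrow> (\<forall>r\<in>C. op_norm r f \<le> (SUP s\<in>\<Union>S. op_norm s f)))}"

definition hk_isolated :: "('a, 'b) monoid_scheme \<Rightarrow> 'a rep set \<Rightarrow> 'a rep set set \<Rightarrow> bool" where
  "hk_isolated G Cl S \<longleftrightarrow> Cl \<in> S \<and> Cl \<notin> hk_closure G (S - {Cl})"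

definition fixed_classes :: "('a, 'b) monoid_scheme \<Rightarrow> 'a rep set set \<Rightarrow> ('a \<Rightarrow> 'a) \<Rightarrow> 'a rep set set" where
  "fixed_classes G D \<psi> = {C \<in> D. \<exists>r\<in>C. rep_equiv G (rep_comp r \<psi>) r}"

definition phi_irreducible :: "('a, 'b) monoid_scheme \<Rightarrow> ('a \<Rightarrow> 'a) \<Rightarrow> 'a rep set \<Rightarrow> bool" where
  "phi_irreducible G \<phi> C \<longleftrightarrow> (\<forall>r\<in>C. \<forall>n. irreducible_rep G (rep_comp r (\<phi> ^^ n)))"

definition dual_f_phi :: "('a, 'b) monoid_scheme \<Rightarrow> ('a \<Rightarrow> 'a) \<Rightarrow> 'a rep set set" where
  "dual_f_phi G \<phi> = {C \<in> dual_f G. phi_irreducible G \<phi> C}"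

datatype zkind = RT | RTf | RTff | AMf

definition Zset :: "zkind \<Rightarrow> ('a, 'b) monoid_scheme \<Rightarrow> ('a \<Rightarrow> 'a) \<Rightarrow> nat \<Rightarrow> 'a rep set set" where
  "Zset k G \<phi> n = (case k of
      RT \<Rightarrow> fixed_classes G (dual G) (\<phi> ^^ n)
    | RTf \<Rightarrow> fixed_classes G (dual_f G) (\<phi> ^^ n)
    | RTff \<Rightarrow> fixed_classes G (dual_ff G) (\<phi> ^^ n)
    | AMf \<Rightarrow> {C. hk_isolated G C (fixed_classes G (dual_f_phi G \<phi>) (\<phi> ^^ n))})"

definition Zcount :: "zkind \<Rightarrow> ('a, 'b) monoid_scheme \<Rightarrow> ('a \<Rightarrow> 'a) \<Rightarrow> nat \<Rightarrow> nat" where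
  "Zcount k G \<phi> n = card (Zset k G \<phi> n)"

definition zeta :: "zkind \<Rightarrow> ('a, 'b) monoid_scheme \<Rightarrow> ('a \<Rightarrow> 'a) \<Rightarrow> complex \<Rightarrow> complex" where
  "zeta k G \<phi> z = exp (\<Sum>n. of_nat (Zcount k G \<phi> (Suc n)) / of_nat (Suc n) * z ^ Suc n)"

definition Pcoef :: "zkind \<Rightarrow> ('a, 'b) monoid_scheme \<Rightarrow> ('a \<Rightarrow> 'a) \<Rightarrow> nat \<Rightarrow> int" where
  "Pcoef k G \<phi> d = (\<Sum>d1 | d1 dvd d. moebius d1 * int (Zcount k G \<phi> (d div d1)))"

end

theory Submission
  imports Defs
begin


lemma moebius_1: "moebius 1 = 1" by (simp add: moebius_def)

lemma moebius_mult_prime: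
  assumes p: "prime p" and e: "e > 0" and np: "\<not> p dvd e"
  shows "moebius (p * e) = - moebius e"
proof -
  have cop: "coprime p e" using p np by (simp add: prime_imp_coprime)
  have sq: "squarefree (p * e) \<longleftrightarrow> squarefree e"
    using squarefree_multD(2)[of p e] squarefree_mult_coprime[OF cop] squarefree_prime[OF p] by blast
  have pf: "prime_factors (p * e) = insert p (prime_factors e)"
    using prime_factors_product[of p e] p e prime_prime_factors[OF p] by (auto simp: prime_gt_0_nat)
  have "p \<notin> prime_factors e" using np by auto
  hence c: "card (prime_factors (p * e)) = Suc (card (prime_factors e))" using pf by simp
  show ?thesis using p e unfolding moebius_def sq c by (auto simp: prime_gt_0_nat)
qed

lemma moebius_sq: assumes "p * p dvd d" "prime (p::nat)" shows "moebius d = 0"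
proof -
  have "\<not> squarefree d" using assms by (metis not_squarefreeI power2_eq_square not_prime_unit)
  thus ?thesis by (simp add: moebius_def)
qed

lemma moebius_sum:
  assumes "n > 0"
  shows "(\<Sum>d | d dvd n. moebius d) = (if n = 1 then 1 else 0)"
proof (cases "n = 1")
  case True
  have "{d::nat. d dvd 1} = {1}" by auto
  then show ?thesis using True by (simp add: moebius_def)
next
  case False
  then obtain p where p: "prime p" "p dvd n" using prime_factor_nat by blast
  define D where "D = {d. d dvd n}"
  define A where "A = {d\<in>D. \<not> p dvd d}"
  define B where "B = {d\<in>D. p dvd d}"
  have fin: "finite D" using assms by (simp add: D_def)
  have DAB: "D = A \<union> B" "A \<inter> B = {}" by (auto simp: A_def B_def)
  have sumD: "sum moebius D = sum moebius A + sum moebius B"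
    using fin DAB by (simp add: sum.union_disjoint)
  define E where "E = {e. e dvd n div p}"
  have np0: "n div p > 0" using p assms by (metis dvd_div_eq_0_iff gr0I less_numeral_extra(3) not_prime_0)
  have finE: "finite E" using np0 by (simp add: E_def)
  have Bimg: "B = (\<lambda>e. p * e) ` E"
  proof
    show "B \<subseteq> (\<lambda>e. p * e) ` E"
    proof
      fix d assume "d \<in> B"
      then obtain e where de: "d = p * e" and "d dvd n" by (auto simp: B_def D_def elim: dvdE)
      hence "e dvd n div p" using p by (metis dvd_mult_div_cancel dvd_times_left_cancel_iff not_prime_0)
      thus "d \<in> (\<lambda>e. p * e) ` E" using de by (auto simp: E_def)
    qed
  next
    show "(\<lambda>e. p * e) ` E \<subseteq> B"
      using p by (auto simp: B_def D_def E_def)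
  qed
  have inj: "inj_on (\<lambda>e. p * e) E" using p by (auto simp: inj_on_def prime_gt_0_nat)
  have "sum moebius B = (\<Sum>e\<in>E. moebius (p * e))" using Bimg inj by (simp add: sum.reindex)
  also have "\<dots> = (\<Sum>e\<in>E. if p dvd e then 0 else - moebius e)"
  proof (rule sum.cong)
    fix e assume e: "e \<in> E"
    hence "e > 0" using np0 by (auto simp: E_def intro: gr0I)
    show "moebius (p * e) = (if p dvd e then 0 else - moebius e)"
      using moebius_mult_prime[OF p(1) \<open>e > 0\<close>] moebius_sq[OF _ p(1), of "p * e"] by auto
  qed simp
  also have "\<dots> = - (\<Sum>e\<in>{e\<in>E. \<not> p dvd e}. moebius e)"
    using finE by (simp add: sum.inter_filter sum_negf[symmetric]) (rule sum.cong, auto)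
  also have "{e\<in>E. \<not> p dvd e} = A"
  proof -
    have "e dvd n div p \<longleftrightarrow> e dvd n" if "\<not> p dvd e" for e
    proof
      assume "e dvd n div p" thus "e dvd n" using p by (metis dvd_mult_div_cancel dvd_mult dvd_trans)
    next
      assume "e dvd n"
      moreover have "coprime e p" using that p by (metis prime_imp_coprime coprime_commute)
      ultimately show "e dvd n div p" using p by (metis coprime_dvd_mult_right_iff dvd_mult_div_cancel)
    qed
    thus ?thesis by (auto simp: A_def D_def E_def)
  qed
  finally show ?thesis using sumD False by (simp add: D_def)
qed

lemma moebius_inversion:
  fixes f :: "nat \<Rightarrow> int" assumes g: "g > 0"
  shows "(\<Sum>d | d dvd g. \<Sum>d1 | d1 dvd d. moebius d1 * f (d div d1)) = f g"
proof -
  define S where "S = Sigma {d. d dvd g} (\<lambda>d. {d1. d1 dvd d})"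
  define T where "T = Sigma {e. e dvd g} (\<lambda>e. {d1. d1 dvd g div e})"
  have finD: "finite {d. d dvd g}" using g by simp
  have fin2: "\<forall>d\<in>{d. d dvd g}. finite {d1. d1 dvd d}"
  proof
    fix d assume "d \<in> {d. d dvd g}" hence "d > 0" using g dvd_pos_nat by blast
    thus "finite {d1. d1 dvd d}" by simp
  qed
  have fin3: "\<forall>e\<in>{e. e dvd g}. finite {d1. d1 dvd g div e}"
  proof
    fix e assume "e \<in> {e. e dvd g}" hence "g div e > 0" using g by (metis dvd_div_eq_0_iff gr0I mem_Collect_eq)
    thus "finite {d1. d1 dvd g div e}" by simp
  qed
  have "(\<Sum>d | d dvd g. \<Sum>d1 | d1 dvd d. moebius d1 * f (d div d1))
      = (\<Sum>(d,d1)\<in>S. moebius d1 * f (d div d1))"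
    unfolding S_def by (rule sum.Sigma[OF finD fin2])
  also have "\<dots> = (\<Sum>(e,d1)\<in>T. moebius d1 * f e)"
  proof (rule sum.reindex_bij_witness[where i = "\<lambda>(e,d1). (e*d1, d1)" and j = "\<lambda>(d,d1). (d div d1, d1)"])
    fix a assume "a \<in> S" then obtain d d1 where a: "a = (d,d1)" "d dvd g" "d1 dvd d" by (auto simp: S_def)
    show "(case case a of (d, d1) \<Rightarrow> (d div d1, d1) of (e, d1) \<Rightarrow> (e * d1, d1)) = a" using a by auto
    have h1: "d div d1 dvd g" using a(2,3) by (metis dvd_div_mult_self dvd_mult_left)
    have h2: "d1 dvd g div (d div d1)"
    proof -
      obtain q where q: "g = d * q" using a(2) by (elim dvdE)
      obtain r where r: "d = d1 * r" using a(3) by (elim dvdE)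
      have "d > 0" using g a(2) dvd_pos_nat by blast
      hence "d1 > 0" "r > 0" using r by auto
      hence "d div d1 = r" using r by simp
      moreover have "g = r * (d1 * q)" using q r by simp
      ultimately show ?thesis using \<open>r > 0\<close> by simp
    qed
    show "(case a of (d, d1) \<Rightarrow> (d div d1, d1)) \<in> T" unfolding T_def a(1) using h1 h2 by simp
    show "(case (case a of (d, d1) \<Rightarrow> (d div d1, d1)) of (e, d1) \<Rightarrow> moebius d1 * f e) =
          (case a of (d, d1) \<Rightarrow> moebius d1 * f (d div d1))" using a by auto
  next
    fix b assume "b \<in> T" then obtain e d1 where b: "b = (e,d1)" "e dvd g" "d1 dvd g div e" by (auto simp: T_def)
    have gq: "g div e > 0" using b g by (metis dvd_div_eq_0_iff gr0I)
    hence "d1 > 0" using b dvd_pos_nat by blast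
    show "(case case b of (e, d1) \<Rightarrow> (e * d1, d1) of (d, d1) \<Rightarrow> (d div d1, d1)) = b" using b \<open>d1 > 0\<close> by auto
    have h3: "e * d1 dvd g" using b(2,3) by (metis dvd_mult_div_cancel mult_dvd_mono dvd_refl)
    show "(case b of (e, d1) \<Rightarrow> (e * d1, d1)) \<in> S" unfolding S_def b(1) using h3 by simp
  qed
  also have "\<dots> = (\<Sum>e | e dvd g. \<Sum>d1 | d1 dvd g div e. moebius d1 * f e)"
    unfolding T_def by (rule sum.Sigma[OF finD fin3, symmetric])
  also have "\<dots> = (\<Sum>e | e dvd g. if e = g then f e else 0)"
  proof (rule sum.cong)
    fix e assume "e \<in> {e. e dvd g}"
    hence e: "e dvd g" by simp
    have gq: "g div e > 0" using e g by (metis dvd_div_eq_0_iff gr0I)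
    have "g div e = 1 \<longleftrightarrow> e = g" using e g by (metis div_self dvd_div_mult_self mult_1 less_irrefl)
    moreover have "(\<Sum>d1 | d1 dvd g div e. moebius d1 * f e) = f e * (\<Sum>d1 | d1 dvd g div e. moebius d1)"
      by (simp add: sum_distrib_left mult.commute)
    ultimately show "(\<Sum>d1 | d1 dvd g div e. moebius d1 * f e) = (if e = g then f e else 0)"
      using moebius_sum[OF gq] by auto
  qed simp
  also have "\<dots> = f g" using finD by simp
  finally show ?thesis .
qed



lemma unitary_map_id: "unitary_map H H (\<lambda>x. x)"
  by (simp add: unitary_map_def bij_betw_id[unfolded id_def])

lemma unitary_map_comp:
  assumes U: "unitary_map H H U" and V: "unitary_map H H V"
  shows "unitary_map H H (U \<circ> V)"
proof -
  have bU: "bij_betw U H H" and bV: "bij_betw V H H" using U V by (auto simp: unitary_map_def)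
  have VH: "\<And>x. x \<in> H \<Longrightarrow> V x \<in> H" using bV by (auto simp: bij_betw_def)
  show ?thesis unfolding unitary_map_def
  proof (intro conjI ballI allI)
    show "bij_betw (U \<circ> V) H H" using bij_betw_trans[OF bV bU] .
  next
    fix x y assume x: "x \<in> H" and y: "y \<in> H"
    have "V (\<lambda>i. x i + y i) = (\<lambda>i. V x i + V y i)" using V x y by (simp add: unitary_map_def)
    moreover have "U (\<lambda>i. V x i + V y i) = (\<lambda>i. U (V x) i + U (V y) i)"
      using U VH[OF x] VH[OF y] by (simp add: unitary_map_def)
    ultimately show "(U \<circ> V) (\<lambda>i. x i + y i) = (\<lambda>i. (U \<circ> V) x i + (U \<circ> V) y i)" by simp
  next
    fix c :: complex and x assume x: "x \<in> H"
    have "V (\<lambda>i. c * x i) = (\<lambda>i. c * V x i)" using V x by (simp add: unitary_map_def)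
    moreover have "U (\<lambda>i. c * V x i) = (\<lambda>i. c * U (V x) i)" using U VH[OF x] by (simp add: unitary_map_def)
    ultimately show "(U \<circ> V) (\<lambda>i. c * x i) = (\<lambda>i. c * (U \<circ> V) x i)" by simp
  next
    fix x assume x: "x \<in> H"
    show "l2norm ((U \<circ> V) x) = l2norm x" using U V VH[OF x] x by (simp add: unitary_map_def)
  qed
qed

lemma rep_equiv_comp_pow:
  assumes cl: "\<forall>g\<in>carrier G. \<psi> g \<in> carrier G"
    and eq: "rep_equiv G (rep_comp r \<psi>) r"
  shows "rep_equiv G (rep_comp r (\<psi> ^^ k)) r"
proof -
  obtain H \<rho> where r: "r = (H, \<rho>)" by fastforce
  from eq obtain U where U: "unitary_map H H U" and UI: "\<forall>g\<in>carrier G. \<forall>x\<in>H. U (\<rho> (\<psi> g) x) = \<rho> g (U x)"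
    by (auto simp: r rep_equiv_def rep_comp_def)
  have UH: "\<And>x. x \<in> H \<Longrightarrow> U x \<in> H" using U by (auto simp: unitary_map_def bij_betw_def)
  have "\<exists>W. unitary_map H H W \<and> (\<forall>g\<in>carrier G. \<forall>x\<in>H. W (\<rho> ((\<psi>^^k) g) x) = \<rho> g (W x))"
  proof (induction k)
    case 0
    show ?case by (rule exI[of _ "\<lambda>x. x"]) (simp add: unitary_map_id)
  next
    case (Suc k)
    then obtain V where V: "unitary_map H H V" and VI: "\<forall>g\<in>carrier G. \<forall>x\<in>H. V (\<rho> ((\<psi>^^k) g) x) = \<rho> g (V x)"
      by blast
    have VH: "\<And>x. x \<in> H \<Longrightarrow> V x \<in> H" using V by (auto simp: unitary_map_def bij_betw_def)
    show ?case
    proof (rule exI[of _ "U \<circ> V"], intro conjI ballI)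
      show "unitary_map H H (U \<circ> V)" using unitary_map_comp[OF U V] .
    next
      fix g x assume g: "g \<in> carrier G" and x: "x \<in> H"
      have "(\<psi>^^Suc k) g = (\<psi>^^k) (\<psi> g)" by (simp only: funpow_Suc_right o_apply)
      hence "(U \<circ> V) (\<rho> ((\<psi>^^Suc k) g) x) = U (\<rho> (\<psi> g) (V x))" using VI cl g x by simp
      also have "\<dots> = \<rho> g (U (V x))" using UI g VH[OF x] by simp
      finally show "(U \<circ> V) (\<rho> ((\<psi>^^Suc k) g) x) = \<rho> g ((U \<circ> V) x)" by simp
    qed
  qed
  thus ?thesis by (simp add: r rep_equiv_def rep_comp_def)
qed

lemma fixed_classes_pow:
  assumes "\<forall>g\<in>carrier G. \<psi> g \<in> carrier G"
  shows "fixed_classes G D \<psi> \<subseteq> fixed_classes G D (\<psi> ^^ k)"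
  using rep_equiv_comp_pow[OF assms] unfolding fixed_classes_def by blast

lemma fixed_classes_cong:
  assumes "\<forall>g\<in>carrier G. \<psi>1 g = \<psi>2 g"
  shows "fixed_classes G D \<psi>1 = fixed_classes G D \<psi>2"
proof -
  have "rep_equiv G (rep_comp r \<psi>1) r = rep_equiv G (rep_comp r \<psi>2) r" for r
  proof -
    obtain H \<rho> where r: "r = (H, \<rho>)" by fastforce
    show ?thesis using assms by (simp add: r rep_equiv_def rep_comp_def)
  qed
  thus ?thesis unfolding fixed_classes_def by simp
qed

lemma funpow_closed:
  assumes "\<forall>g\<in>carrier G. \<phi> g \<in> carrier G"
  shows "\<forall>g\<in>carrier G. (\<phi>^^k) g \<in> carrier G"
  by (induction k) (use assms in auto)

lemma funpow_mod:
  assumes cl: "\<forall>g\<in>carrier G. \<phi> g \<in> carrier G" and per: "\<forall>g\<in>carrier G. (\<phi> ^^ m) g = g"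
  shows "\<forall>g\<in>carrier G. (\<phi>^^a) g = (\<phi>^^(a mod m)) g"
proof
  fix g assume g: "g \<in> carrier G"
  have mq: "(\<phi>^^(m*q)) g = g" for q
  proof (induction q)
    case (Suc q)
    have "(\<phi>^^(m*Suc q)) g = (\<phi>^^m) ((\<phi>^^(m*q)) g)" by (simp add: funpow_add)
    thus ?case using Suc per g by simp
  qed simp
  have "(\<phi>^^a) g = (\<phi>^^(a mod m + m * (a div m))) g" by simp
  also have "\<dots> = (\<phi>^^(a mod m)) ((\<phi>^^(m * (a div m))) g)" by (simp only: funpow_add o_apply)
  also have "\<dots> = (\<phi>^^(a mod m)) g" using mq by simp
  finally show "(\<phi>^^a) g = (\<phi>^^(a mod m)) g" .
qed

lemma fixed_classes_gcd:
  assumes cl: "\<forall>g\<in>carrier G. \<phi> g \<in> carrier G" and per: "\<forall>g\<in>carrier G. (\<phi> ^^ m) g = g"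
    and n: "n \<ge> 1"
  shows "fixed_classes G D (\<phi>^^n) = fixed_classes G D (\<phi>^^(gcd n m))"
proof
  obtain c where c: "n = gcd n m * c" by (metis gcd_dvd1 dvdE)
  have "fixed_classes G D (\<phi>^^(gcd n m)) \<subseteq> fixed_classes G D ((\<phi>^^(gcd n m))^^c)"
    by (rule fixed_classes_pow[OF funpow_closed[OF cl]])
  also have "(\<phi>^^(gcd n m))^^c = \<phi>^^n" using c by (simp add: funpow_mult)
  finally show "fixed_classes G D (\<phi>^^(gcd n m)) \<subseteq> fixed_classes G D (\<phi>^^n)" .
next
  obtain x y where xy: "n * x = m * y + gcd n m" using bezout_nat[of n m] n by auto
  have "fixed_classes G D (\<phi>^^n) \<subseteq> fixed_classes G D ((\<phi>^^n)^^x)"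
    by (rule fixed_classes_pow[OF funpow_closed[OF cl]])
  also have "\<dots> = fixed_classes G D (\<phi>^^(gcd n m))"
  proof (rule fixed_classes_cong, intro ballI)
    fix g assume g: "g \<in> carrier G"
    have "(n * x) mod m = gcd n m mod m" using xy by simp
    hence "((\<phi>^^n)^^x) g = (\<phi>^^(gcd n m mod m)) g"
      using funpow_mod[OF cl per, rule_format, OF g, of "n*x"] by (simp add: funpow_mult mult.commute)
    also have "\<dots> = (\<phi>^^(gcd n m)) g" using funpow_mod[OF cl per, rule_format, OF g, of "gcd n m"] by simp
    finally show "((\<phi>^^n)^^x) g = (\<phi>^^(gcd n m)) g" .
  qed
  finally show "fixed_classes G D (\<phi>^^n) \<subseteq> fixed_classes G D (\<phi>^^(gcd n m))" .
qed

lemma Zcount_gcd: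
  assumes cl: "\<forall>g\<in>carrier G. \<phi> g \<in> carrier G" and per: "\<forall>g\<in>carrier G. (\<phi> ^^ m) g = g"
    and n: "n \<ge> 1"
  shows "Zcount k G \<phi> n = Zcount k G \<phi> (gcd n m)"
  unfolding Zcount_def Zset_def using fixed_classes_gcd[OF cl per n]
  by (cases k) simp_all



lemma norm_pow_lt1: fixes z :: complex assumes "norm z < 1" "d > 0" shows "norm (z ^ d) < 1"
proof -
  have "norm z ^ d < 1 ^ d" by (rule power_strict_mono) (use assms in auto)
  thus ?thesis by (simp add: norm_power)
qed

lemma ln_series_div:
  fixes z :: complex assumes z: "norm z < 1" and d: "d > 0"
  shows "(\<lambda>n. if d dvd n then z ^ n / of_nat n else 0) sums (- ln (1 - z ^ d) / of_nat d)"
proof -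
  define f where "f n = (if d dvd n then z ^ n / of_nat n else (0::complex))" for n
  have w: "norm (- (z ^ d)) < 1" using norm_pow_lt1[OF z d] by simp
  have eq: "(\<lambda>j. (-1)^Suc j / of_nat j * (- (z^d))^j) = (\<lambda>j. - (z ^ (d * j) / of_nat j))"
    by (rule ext) (simp add: power_minus' power_mult)
  have "(\<lambda>j. - (z ^ (d * j) / of_nat j)) sums ln (1 + - (z ^ d))" using Ln_series[OF w] unfolding eq .
  hence "(\<lambda>j. - (z ^ (d * j) / of_nat j)) sums ln (1 - z ^ d)" by simp
  from sums_minus[OF this] have "(\<lambda>j. z ^ (d * j) / of_nat j) sums (- ln (1 - z ^ d))" by simp
  hence A: "(\<lambda>j. z ^ (d * j) / of_nat j / of_nat d) sums (- ln (1 - z ^ d) / of_nat d)" by (rule sums_divide)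
  have eqf: "(\<lambda>j. z ^ (d * j) / of_nat j / of_nat d) = (\<lambda>j. f (d * j))"
  proof (rule ext)
    fix j
    have "z ^ (d * j) / of_nat j / of_nat d = z ^ (d * j) / (of_nat j * of_nat d)" by (rule divide_divide_eq_left)
    also have "of_nat j * of_nat d = (of_nat (d * j) :: complex)" by simp
    finally show "z ^ (d * j) / of_nat j / of_nat d = f (d * j)" by (simp add: f_def)
  qed
  have sm: "strict_mono (\<lambda>j. d * j)" using d by (simp add: strict_mono_def)
  have hz: "f n = 0" if "n \<notin> range (\<lambda>j. d * j)" for n
  proof -
    have "\<not> d dvd n" using that by (metis dvdE rangeI)
    thus ?thesis by (simp add: f_def)
  qed
  have "(\<lambda>j. f (d * j)) sums (- ln (1 - z ^ d) / of_nat d)" using A unfolding eqf .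
  moreover have "(\<lambda>j. f (d * j)) sums (- ln (1 - z ^ d) / of_nat d) \<longleftrightarrow> f sums (- ln (1 - z ^ d) / of_nat d)"
    by (rule sums_mono_reindex[OF sm]) (rule hz)
  ultimately have "f sums (- ln (1 - z ^ d) / of_nat d)" by simp
  thus ?thesis unfolding f_def .
qed

lemma zeta_formula:
  fixes c :: "nat \<Rightarrow> nat" and P :: "nat \<Rightarrow> int" and m :: nat and z :: complex
  assumes m: "m > 0" and F1: "\<forall>n\<ge>1. c n = c (gcd n m)"
    and F2: "\<forall>g>0. (\<Sum>d | d dvd g. P d) = int (c g)" and z: "norm z < 1"
  shows "exp (\<Sum>n. of_nat (c (Suc n)) / of_nat (Suc n) * z ^ Suc n) =
     (\<Prod>d | d dvd m. (1 - z ^ d) powr (- of_int (P d) / of_nat d))"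
proof -
  define D where "D = {d. d dvd m}"
  have finD: "finite D" using m by (simp add: D_def)
  have Dpos: "d > 0" if "d \<in> D" for d using that m dvd_pos_nat by (auto simp: D_def)
  define e where "e d n = (if d dvd n then z ^ n / of_nat n else (0::complex))" for d n
  define S where "S = (\<Sum>d\<in>D. of_int (P d) * (- ln (1 - z ^ d) / of_nat d))"
  have "(\<lambda>n. \<Sum>d\<in>D. of_int (P d) * e d n) sums S"
    unfolding S_def e_def
    by (rule sums_sum, rule sums_mult, rule ln_series_div[OF z Dpos])
  moreover have "(\<Sum>d\<in>D. of_int (P d) * e d n) = of_nat (c n) / of_nat n * z ^ n" for n
  proof (cases "n = 0")
    case True thus ?thesis by (simp add: e_def)
  next
    case False
    have "(\<Sum>d\<in>D. of_int (P d) * e d n) = (\<Sum>d\<in>D. of_int (if d dvd n then P d else 0) * (z ^ n / of_nat n))"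
      by (rule sum.cong) (auto simp: e_def)
    also have "\<dots> = of_int (\<Sum>d\<in>D. if d dvd n then P d else 0) * (z ^ n / of_nat n)"
      by (simp only: sum_distrib_right of_int_sum)
    also have "(\<Sum>d\<in>D. if d dvd n then P d else 0) = (\<Sum>d\<in>{d\<in>D. d dvd n}. P d)"
      using finD by (simp add: sum.inter_filter)
    also have "{d\<in>D. d dvd n} = {d. d dvd gcd n m}" by (auto simp: D_def)
    also have "(\<Sum>d | d dvd gcd n m. P d) = int (c (gcd n m))" using F2[rule_format, of "gcd n m"] m by simp
    also have "c (gcd n m) = c n" using F1[rule_format, of n] False by simp
    finally show ?thesis by simp
  qed
  ultimately have A: "(\<lambda>n. of_nat (c n) / of_nat n * z ^ n) sums S" by simp
  have "(\<lambda>n. of_nat (c (Suc n)) / of_nat (Suc n) * z ^ Suc n) sums S"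
    using A by (subst sums_Suc_iff) simp
  hence "(\<Sum>n. of_nat (c (Suc n)) / of_nat (Suc n) * z ^ Suc n) = S" by (rule sums_unique[symmetric])
  hence "exp (\<Sum>n. of_nat (c (Suc n)) / of_nat (Suc n) * z ^ Suc n) = exp S" by simp
  also have "\<dots> = (\<Prod>d\<in>D. exp (of_int (P d) * (- ln (1 - z ^ d) / of_nat d)))"
    unfolding S_def using finD by (rule exp_sum)
  also have "\<dots> = (\<Prod>d\<in>D. (1 - z ^ d) powr (- of_int (P d) / of_nat d))"
  proof (rule prod.cong)
    fix d assume "d \<in> D"
    hence "norm (z ^ d) < 1" using norm_pow_lt1[OF z Dpos] by blast
    hence "1 - z ^ d \<noteq> 0" by auto
    thus "exp (of_int (P d) * (- ln (1 - z ^ d) / of_nat d)) = (1 - z ^ d) powr (- of_int (P d) / of_nat d)"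
      by (simp add: powr_def)
  qed simp
  finally show ?thesis by (simp add: D_def)
qed


theorem mainTheorem1:
  fixes G :: "('a, 'b) monoid_scheme" and \<phi> :: "'a \<Rightarrow> 'a" and m :: nat and k :: zkind
  assumes "group G"
    and "\<phi> \<in> iso G G"
    and "m > 0"
    and "\<forall>g\<in>carrier G. (\<phi> ^^ m) g = g"
    and "\<forall>j. 0 < j \<and> j < m \<longrightarrow> \<not> (\<forall>g\<in>carrier G. (\<phi> ^^ j) g = g)"
    and "\<forall>n\<ge>1. finite (Zset k G \<phi> n)"
  shows "\<forall>z::complex. norm z < 1 \<longrightarrow>
     zeta k G \<phi> z = (\<Prod>d | d dvd m. (1 - z ^ d) powr (- of_int (Pcoef k G \<phi> d) / of_nat d))"
proof (intro allI impI)
  fix z :: complex assume z: "norm z < 1"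
  have hom: "\<phi> \<in> hom G G" using assms(2) by (rule iso_imp_homomorphism)
  have cl: "\<forall>g\<in>carrier G. \<phi> g \<in> carrier G" using hom by (auto simp: hom_def)
  have F1: "\<forall>n\<ge>1. Zcount k G \<phi> n = Zcount k G \<phi> (gcd n m)"
    using Zcount_gcd[OF cl assms(4)] by blast
  have F2: "\<forall>g>0. (\<Sum>d | d dvd g. Pcoef k G \<phi> d) = int (Zcount k G \<phi> g)"
  proof (intro allI impI)
    fix g :: nat assume g: "g > 0"
    show "(\<Sum>d | d dvd g. Pcoef k G \<phi> d) = int (Zcount k G \<phi> g)"
      unfolding Pcoef_def by (rule moebius_inversion[OF g, of "\<lambda>n. int (Zcount k G \<phi> n)"])
  qed
  show "zeta k G \<phi> z = (\<Prod>d | d dvd m. (1 - z ^ d) powr (- of_int (Pcoef k G \<phi> d) / of_nat d))"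
    unfolding zeta_def by (rule zeta_formula[OF assms(3) F1 F2 z])
qed

end
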